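(* Let $(\alpha_j)_{j\in\mathbb N}$, $(\beta_j)_{j\in\mathbb N}$, $(\sigma_j)_{j\in\mathbb N}$ be real sequences with $$\alpha_j\ge 0,\qquad 1\ge\beta_1\ge\beta_2\ge\cdots>0,\qquad 1<\sigma_1\le\sigma_2\le\cdots,$$ and suppose there is a constant $c>0$ with $0\le\alpha_j\le c\beta_j$ for all $j\in\mathbb N$. Let $\mathcal B=\{\mathcal B_d\}_{d\in\mathbb N}$ be the associated sequence of additive random fields with Korobov-kernel marginals (see context). Then $\mathcal B$ is strongly polynomially tractable for the normalized error criterion (NOR) if and only if $$A_*:=\liminf_{d\to\infty}\frac{\ln(1/\beta_d)}{\ln d}>1,$$ and in that case the exponent of strong polynomial tractability (for NOR) is $$p^{\rm str-avg}=\max\Big\{\frac{2}{A_*-1},\frac{2}{\sigma_1-1}\Big\}.$$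
   Context: For $\alpha\ge0$, $\beta>0$, $\sigma>1$, let $B_{\alpha,\beta,\sigma}(x)$, $x\in[0,1]$, be a zero-mean random process with covariance function $\kappa_{\alpha,\beta,\sigma}(x,y)=\alpha+2\beta\sum_{k=1}^\infty k^{-\sigma}\cos(2\pi k(x-y))$. Let $B_j$, $j\in\mathbb N$, be independent zero-mean random processes on $[0,1]$ with covariance functions $\kappa_{\alpha_j,\beta_j,\sigma_j}$, and for $d\in\mathbb N$ let $\mathcal B_d(\mathbf x)=\sum_{j=1}^d B_j(x_j)$, $\mathbf x\in[0,1]^d$, a zero-mean random field with covariance $\kappa^{\mathcal B_d}(\mathbf x,\mathbf y)=\sum_{j=1}^d\kappa_{\alpha_j,\beta_j,\sigma_j}(x_j,y_j)$, viewed as a random element of $L_2([0,1]^d)$. The $n$th minimal average case error is $e^{\mathcal B_d}(n)=\inf\{(\mathbb E\|\mathcal B_d-\sum_{m=1}^n(\mathcal B_d,\varphi_m)_{2,d}\psi_m\|_{2,d}^2)^{1/2}:\varphi_m,\psi_m\in L_2([0,1]^d)\}$ and $e^{\mathcal B_d}(0)=(\mathbb E\|\mathcal B_d\|_{2,d}^2)^{1/2}$. (Equivalently, if $\lambda_{d,1}\ge\lambda_{d,2}\ge\cdots$ are the eigenvalues of the covariance operator of $\mathcal B_d$ on $L_2([0,1]^d)$, namely $\sum_{j=1}^d\alpha_j$ together with the numbers $\beta_j k^{-\sigma_j}$, $k\in\mathbb N$, $j=1,\dots,d$, each taken twice, then $e^{\mathcal B_d}(n)^2=\sum_{j>n}\lambda_{d,j}$.)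 For $\varepsilon\in(0,1)$, the NOR information complexity is $n^{\mathcal B_d,\mathrm{NOR}}(\varepsilon)=\min\{n\in\mathbb N: e^{\mathcal B_d}(n)\le\varepsilon\, e^{\mathcal B_d}(0)\}$. The problem is strongly polynomially tractable (SPT) for NOR if there are $C,p\ge0$ with $n^{\mathcal B_d,\mathrm{NOR}}(\varepsilon)\le C\varepsilon^{-p}$ for all $d\in\mathbb N$, $\varepsilon\in(0,1)$; the exponent $p^{\rm str-avg}$ is the infimum of such $p$. Convention: $2/(A_*-1)=0$ if $A_*=\infty$. *)

theory Defs
  imports "HOL-Analysis.Analysis" "HOL-Library.Extended_Real"
begin

text \<open>Eigenvalues of the covariance operator of B_d, indexed by
  None (the eigenvalue sum of alpha_j, j=1..d) and Some (j,k,b)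
  (the eigenvalue beta_j k^(-sigma_j), 1<=j<=d, k>=1, each twice via b::bool).
  Indices outside the ranges carry eigenvalue 0 (harmless).\<close>
definition eig :: "(nat \<Rightarrow> real) \<Rightarrow> (nat \<Rightarrow> real) \<Rightarrow> (nat \<Rightarrow> real) \<Rightarrow> nat
    \<Rightarrow> (nat \<times> nat \<times> bool) option \<Rightarrow> real" where
  "eig \<alpha> \<beta> \<sigma> d i = (case i of
      None \<Rightarrow> (\<Sum>j=1..d. \<alpha> j)
    | Some (j, k, b) \<Rightarrow> (if 1 \<le> j \<and> j \<le> d \<and> 1 \<le> k then \<beta> j * real k powr (- \<sigma> j) else 0))"

text \<open>Squared n-th minimal average case error: sum of all eigenvalues except
  the n largest, i.e. the infimum over index sets S of at most n eigenvalues
  of the sum of the remaining ones.\<close>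
definition err2 :: "(nat \<Rightarrow> real) \<Rightarrow> (nat \<Rightarrow> real) \<Rightarrow> (nat \<Rightarrow> real) \<Rightarrow> nat \<Rightarrow> nat \<Rightarrow> real" where
  "err2 \<alpha> \<beta> \<sigma> d n = (INF S \<in> {S. finite S \<and> card S \<le> n}. infsum (eig \<alpha> \<beta> \<sigma> d) (UNIV - S))"

definition err :: "(nat \<Rightarrow> real) \<Rightarrow> (nat \<Rightarrow> real) \<Rightarrow> (nat \<Rightarrow> real) \<Rightarrow> nat \<Rightarrow> nat \<Rightarrow> real" where
  "err \<alpha> \<beta> \<sigma> d n = sqrt (err2 \<alpha> \<beta> \<sigma> d n)"

definition n_nor :: "(nat \<Rightarrow> real) \<Rightarrow> (nat \<Rightarrow> real) \<Rightarrow> (nat \<Rightarrow> real) \<Rightarrow> nat \<Rightarrow> real \<Rightarrow> nat" where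
  "n_nor \<alpha> \<beta> \<sigma> d \<epsilon> = (LEAST n. err \<alpha> \<beta> \<sigma> d n \<le> \<epsilon> * err \<alpha> \<beta> \<sigma> d 0)"

definition spt_bound :: "(nat \<Rightarrow> real) \<Rightarrow> (nat \<Rightarrow> real) \<Rightarrow> (nat \<Rightarrow> real) \<Rightarrow> real \<Rightarrow> bool" where
  "spt_bound \<alpha> \<beta> \<sigma> p \<longleftrightarrow> p \<ge> 0 \<and> (\<exists>C\<ge>0. \<forall>d\<ge>1. \<forall>\<epsilon>. 0 < \<epsilon> \<and> \<epsilon> < 1 \<longrightarrow>
      real (n_nor \<alpha> \<beta> \<sigma> d \<epsilon>) \<le> C * \<epsilon> powr (- p))"

definition SPT_NOR :: "(nat \<Rightarrow> real) \<Rightarrow> (nat \<Rightarrow> real) \<Rightarrow> (nat \<Rightarrow> real) \<Rightarrow> bool" where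
  "SPT_NOR \<alpha> \<beta> \<sigma> \<longleftrightarrow> (\<exists>p. spt_bound \<alpha> \<beta> \<sigma> p)"

definition p_str_avg :: "(nat \<Rightarrow> real) \<Rightarrow> (nat \<Rightarrow> real) \<Rightarrow> (nat \<Rightarrow> real) \<Rightarrow> real" where
  "p_str_avg \<alpha> \<beta> \<sigma> = Inf {p. spt_bound \<alpha> \<beta> \<sigma> p}"

definition A_star :: "(nat \<Rightarrow> real) \<Rightarrow> ereal" where
  "A_star \<beta> = liminf (\<lambda>d. ereal (ln (1 / \<beta> d) / ln (real d)))"

end

theory Submission
  imports Defs
begin

definition Z :: "real \<Rightarrow> real" where "Z s = suminf (\<lambda>k. real k powr (- s))"

lemma Z_summable: "s > 1 \<Longrightarrow> summable (\<lambda>k. real k powr (- s))"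
  by (subst summable_real_powr_iff) auto

lemma Z_sum_le: assumes "s > 1" "finite K" shows "(\<Sum>k\<in>K. real k powr (- s)) \<le> Z s"
  unfolding Z_def by (rule sum_le_suminf[OF Z_summable[OF assms(1)] assms(2)]) auto

lemma Z_ge1: assumes "s > 1" shows "Z s \<ge> 1"
  using Z_sum_le[OF assms, of "{1}"] by simp

locale setting =
  fixes \<alpha> \<beta> \<sigma> :: "nat \<Rightarrow> real" and c :: real
  assumes a_nn: "\<And>j. j \<ge> 1 \<Longrightarrow> \<alpha> j \<ge> 0"
    and b1: "\<beta> 1 \<le> 1"
    and b_dec: "\<And>j. j \<ge> 1 \<Longrightarrow> \<beta> (Suc j) \<le> \<beta> j"
    and b_pos: "\<And>j. j \<ge> 1 \<Longrightarrow> \<beta> j > 0"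
    and s1: "\<sigma> 1 > 1"
    and s_inc: "\<And>j. j \<ge> 1 \<Longrightarrow> \<sigma> j \<le> \<sigma> (Suc j)"
    and c_pos: "c > 0"
    and a_le: "\<And>j. j \<ge> 1 \<Longrightarrow> \<alpha> j \<le> c * \<beta> j"
begin

lemma b_mono: assumes "1 \<le> i" "i \<le> j" shows "\<beta> j \<le> \<beta> i"
  using assms(2,1)
proof (induction j rule: dec_induct)
  case base then show ?case by simp
next
  case (step n) then show ?case using b_dec[of n] by simp
qed

lemma s_mono: assumes "1 \<le> i" "i \<le> j" shows "\<sigma> i \<le> \<sigma> j"
  using assms(2,1)
proof (induction j rule: dec_induct)
  case base then show ?case by simp
next
  case (step n) then show ?case using s_inc[of n] by simp
qed

lemma b_le1: "j \<ge> 1 \<Longrightarrow> \<beta> j \<le> 1"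
  using b_mono[of 1 j] b1 by simp

lemma s_ge: "j \<ge> 1 \<Longrightarrow> \<sigma> j \<ge> \<sigma> 1"
  using s_mono[of 1 j] by simp

abbreviation e where "e d \<equiv> eig \<alpha> \<beta> \<sigma> d"

lemma eig_nn: "e d i \<ge> 0"
proof (cases i)
  case None then show ?thesis unfolding eig_def using a_nn by (auto intro!: sum_nonneg)
next
  case (Some x) then show ?thesis unfolding eig_def using b_pos
    by (cases x) (auto intro!: mult_nonneg_nonneg less_imp_le)
qed

lemma eig_Some: "1 \<le> j \<Longrightarrow> j \<le> d \<Longrightarrow> 1 \<le> k \<Longrightarrow> e d (Some (j,k,b)) = \<beta> j * real k powr (- \<sigma> j)"
  unfolding eig_def by simp

lemma box_bound:
  assumes t: "0 < \<tau>" "\<tau> \<le> 1" "\<sigma> 1 * \<tau> > 1"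
  shows "(\<Sum>x\<in>{1..d} \<times> {1..K} \<times> (UNIV::bool set). e d (Some x) powr \<tau>)
        \<le> 2 * Z (\<sigma> 1 * \<tau>) * (\<Sum>j=1..d. \<beta> j powr \<tau>)"
proof -
  have "(\<Sum>x\<in>{1..d} \<times> {1..K} \<times> (UNIV::bool set). e d (Some x) powr \<tau>)
     = (\<Sum>j\<in>{1..d}. \<Sum>k\<in>{1..K}. \<Sum>b\<in>(UNIV::bool set). e d (Some (j,k,b)) powr \<tau>)"
    by (simp add: sum.cartesian_product)
  also have "\<dots> \<le> (\<Sum>j\<in>{1..d}. 2 * Z (\<sigma> 1 * \<tau>) * \<beta> j powr \<tau>)"
  proof (rule sum_mono)
    fix j assume j: "j \<in> {1..d}"
    have "(\<Sum>k\<in>{1..K}. \<Sum>b\<in>(UNIV::bool set). e d (Some (j,k,b)) powr \<tau>)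
        = (\<Sum>k\<in>{1..K}. 2 * (\<beta> j powr \<tau> * real k powr (- \<sigma> j * \<tau>)))"
    proof (rule sum.cong[OF refl])
      fix k assume k: "k \<in> {1..K}"
      have "e d (Some (j,k,b)) powr \<tau> = \<beta> j powr \<tau> * real k powr (- \<sigma> j * \<tau>)" for b
        using j k b_pos[of j] by (simp add: eig_Some powr_mult powr_powr)
      then show "(\<Sum>b\<in>(UNIV::bool set). e d (Some (j,k,b)) powr \<tau>) = 2 * (\<beta> j powr \<tau> * real k powr (- \<sigma> j * \<tau>))"
        by (simp add: UNIV_bool)
    qed
    also have "\<dots> \<le> (\<Sum>k\<in>{1..K}. 2 * (\<beta> j powr \<tau> * real k powr (- (\<sigma> 1 * \<tau>))))"
    proof (rule sum_mono)
      fix k assume k: "k \<in> {1..K}"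
      have "real k powr (- \<sigma> j * \<tau>) \<le> real k powr (- (\<sigma> 1 * \<tau>))"
        using k s_ge[of j] j t by (intro powr_mono) (auto intro: mult_right_mono)
      then show "2 * (\<beta> j powr \<tau> * real k powr (- \<sigma> j * \<tau>)) \<le> 2 * (\<beta> j powr \<tau> * real k powr (- (\<sigma> 1 * \<tau>)))"
        by (simp add: mult_left_mono)
    qed
    also have "\<dots> = 2 * \<beta> j powr \<tau> * (\<Sum>k\<in>{1..K}. real k powr (- (\<sigma> 1 * \<tau>)))"
      by (simp add: sum_distrib_left mult.assoc)
    also have "\<dots> \<le> 2 * \<beta> j powr \<tau> * Z (\<sigma> 1 * \<tau>)"
      by (intro mult_left_mono Z_sum_le t) auto
    finally show "(\<Sum>k\<in>{1..K}. \<Sum>b\<in>(UNIV::bool set). e d (Some (j,k,b)) powr \<tau>) \<le> 2 * Z (\<sigma> 1 * \<tau>) * \<beta> j powr \<tau>"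
      by (simp add: mult_ac)
  qed
  also have "\<dots> = 2 * Z (\<sigma> 1 * \<tau>) * (\<Sum>j=1..d. \<beta> j powr \<tau>)"
    by (simp add: sum_distrib_left)
  finally show ?thesis .
qed

lemma fin_bound:
  assumes t: "0 < \<tau>" "\<tau> \<le> 1" "\<sigma> 1 * \<tau> > 1" and F: "finite F"
  shows "(\<Sum>i\<in>F. e d i powr \<tau>) \<le> (\<Sum>j=1..d. \<alpha> j) powr \<tau> + 2 * Z (\<sigma> 1 * \<tau>) * (\<Sum>j=1..d. \<beta> j powr \<tau>)"
proof -
  define F' where "F' = {x. Some x \<in> F}"
  have fF': "finite F'" unfolding F'_def using finite_vimageI[OF F, of Some] by (simp add: vimage_def)
  define K where "K = Max (insert 0 ((\<lambda>x. fst (snd x)) ` F'))"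
  define box where "box = {1..d} \<times> {1..K} \<times> (UNIV::bool set)"
  have fbox: "finite box" unfolding box_def by simp
  let ?g = "\<lambda>i. e d i powr \<tau>"
  have gnn: "?g i \<ge> 0" for i by simp
  have "F \<subseteq> insert None (Some ` F')" unfolding F'_def proof
    fix x assume "x \<in> F" then show "x \<in> insert None (Some ` {x. Some x \<in> F})" by (cases x) auto
  qed
  then have "sum ?g F \<le> sum ?g (insert None (Some ` F'))"
    by (intro sum_mono2) (use fF' in auto)
  also have "\<dots> \<le> ?g None + sum ?g (Some ` F')"
    by (simp add: sum.insert_if fF')
  also have "sum ?g (Some ` F') = sum (\<lambda>x. ?g (Some x)) F'"
    by (simp add: sum.reindex)
  finally have A: "sum ?g F \<le> ?g None + sum (\<lambda>x. ?g (Some x)) F'" .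
  have "sum (\<lambda>x. ?g (Some x)) F' \<le> sum (\<lambda>x. ?g (Some x)) (F' \<union> box)"
    by (intro sum_mono2) (use fF' fbox in auto)
  also have "\<dots> = sum (\<lambda>x. ?g (Some x)) box"
  proof (rule sum.mono_neutral_right)
    show "\<forall>i\<in>F' \<union> box - box. ?g (Some i) = 0"
    proof
      fix x assume x: "x \<in> F' \<union> box - box"
      obtain j k b where xe: "x = (j,k,b)" by (cases x) auto
      have xF: "x \<in> F'" "x \<notin> box" using x by auto
      have "k \<in> (\<lambda>x. fst (snd x)) ` F'" using xF(1) unfolding xe by force
      then have "k \<le> K" using fF' unfolding K_def by (intro Max_ge) auto
      then have "\<not> (1 \<le> j \<and> j \<le> d \<and> 1 \<le> k)" using xF(2) unfolding box_def xe by auto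
      then show "?g (Some x) = 0" unfolding xe eig_def by (simp only: if_False prod.case option.case) simp
    qed
  qed (use fF' fbox in auto)
  also have "\<dots> \<le> 2 * Z (\<sigma> 1 * \<tau>) * (\<Sum>j=1..d. \<beta> j powr \<tau>)"
    unfolding box_def by (rule box_bound[OF t])
  finally have B0: "sum (\<lambda>x. ?g (Some x)) F' \<le> 2 * Z (\<sigma> 1 * \<tau>) * (\<Sum>j=1..d. \<beta> j powr \<tau>)" .
  have "sum ?g F \<le> ?g None + 2 * Z (\<sigma> 1 * \<tau>) * (\<Sum>j=1..d. \<beta> j powr \<tau>)" using A B0 by linarith
  moreover have "?g None = (\<Sum>j=1..d. \<alpha> j) powr \<tau>" unfolding eig_def by simp
  ultimately show ?thesis by simp
qed

lemma summ: "e d summable_on A"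
proof -
  have "e d summable_on UNIV"
  proof (rule nonneg_bdd_above_summable_on)
    show "bdd_above (sum (e d) ` {F. F \<subseteq> UNIV \<and> finite F})"
    proof (rule bdd_aboveI)
      fix y assume "y \<in> sum (e d) ` {F. F \<subseteq> UNIV \<and> finite F}"
      then obtain F where F: "finite F" "y = sum (e d) F" by auto
      have "sum (e d) F = (\<Sum>i\<in>F. e d i powr 1)" by (simp add: eig_nn)
      also have "\<dots> \<le> (\<Sum>j=1..d. \<alpha> j) powr 1 + 2 * Z (\<sigma> 1 * 1) * (\<Sum>j=1..d. \<beta> j powr 1)"
        by (rule fin_bound) (use s1 F in auto)
      finally show "y \<le> (\<Sum>j=1..d. \<alpha> j) powr 1 + 2 * Z (\<sigma> 1 * 1) * (\<Sum>j=1..d. \<beta> j powr 1)"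
        using F by simp
    qed
  qed (simp add: eig_nn)
  then show ?thesis by (rule summable_on_subset) auto
qed


definition T where "T d = infsum (e d) UNIV"

lemma T_nn: "T d \<ge> 0" unfolding T_def by (rule infsum_nonneg) (simp add: eig_nn)

lemma err2_0: "err2 \<alpha> \<beta> \<sigma> d 0 = T d"
proof -
  have "{S. finite S \<and> card S \<le> 0} = {{}}" by auto
  then show ?thesis unfolding err2_def T_def by (subst \<open>_ = {{}}\<close>) simp
qed

lemma err2_le: "finite S \<Longrightarrow> card S \<le> n \<Longrightarrow> err2 \<alpha> \<beta> \<sigma> d n \<le> infsum (e d) (UNIV - S)"
  unfolding err2_def
  by (rule cINF_lower) (auto intro!: bdd_belowI[of _ 0] infsum_nonneg simp: eig_nn)

lemma err2_ge: "(\<And>S. finite S \<Longrightarrow> card S \<le> n \<Longrightarrow> L \<le> infsum (e d) (UNIV - S)) \<Longrightarrow> L \<le> err2 \<alpha> \<beta> \<sigma> d n"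
  unfolding err2_def
  by (rule cINF_greatest) (auto intro: exI[of _ "{}"])

lemma err2_nn: "err2 \<alpha> \<beta> \<sigma> d n \<ge> 0"
  by (rule err2_ge) (auto intro!: infsum_nonneg simp: eig_nn)

lemma T_ge: assumes "d \<ge> 1" shows "T d \<ge> \<beta> 1"
proof -
  have "sum (e d) {Some (1,1,True)} \<le> T d" unfolding T_def
    by (rule finite_sum_le_infsum) (auto simp: summ eig_nn)
  then show ?thesis using assms by (simp add: eig_Some)
qed

lemma T_pos: "d \<ge> 1 \<Longrightarrow> T d > 0"
  using T_ge b_pos[of 1] by force

definition K0 where "K0 = c + 2 * Z (\<sigma> 1)"

lemma K0_ge: "K0 \<ge> 1" unfolding K0_def using Z_ge1[OF s1] c_pos by simp

lemma T_le: "T d \<le> K0 * (\<Sum>j=1..d. \<beta> j)"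
proof -
  have "T d \<le> (\<Sum>j=1..d. \<alpha> j) powr 1 + 2 * Z (\<sigma> 1 * 1) * (\<Sum>j=1..d. \<beta> j powr 1)"
    unfolding T_def
  proof (rule infsum_le_finite_sums[OF summ])
    fix F :: "(nat \<times> nat \<times> bool) option set" assume F: "finite F"
    have "sum (e d) F = (\<Sum>i\<in>F. e d i powr 1)" by (simp add: eig_nn)
    also have "\<dots> \<le> (\<Sum>j=1..d. \<alpha> j) powr 1 + 2 * Z (\<sigma> 1 * 1) * (\<Sum>j=1..d. \<beta> j powr 1)"
      by (rule fin_bound) (use s1 F in auto)
    finally show "sum (e d) F \<le> (\<Sum>j=1..d. \<alpha> j) powr 1 + 2 * Z (\<sigma> 1 * 1) * (\<Sum>j=1..d. \<beta> j powr 1)" .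
  qed
  also have "(\<Sum>j=1..d. \<alpha> j) powr 1 = (\<Sum>j=1..d. \<alpha> j)" using a_nn by (subst powr_one) (auto intro!: sum_nonneg)
  also have "(\<Sum>j=1..d. \<beta> j powr 1) = (\<Sum>j=1..d. \<beta> j)"
    using b_pos by (intro sum.cong) (auto simp: less_imp_le)
  also have "(\<Sum>j=1..d. \<alpha> j) \<le> (\<Sum>j=1..d. c * \<beta> j)" using a_le by (intro sum_mono) auto
  finally show ?thesis unfolding K0_def by (simp add: sum_distrib_left algebra_simps)
qed

lemma err_iff: assumes "\<epsilon> > 0"
  shows "err \<alpha> \<beta> \<sigma> d n \<le> \<epsilon> * err \<alpha> \<beta> \<sigma> d 0 \<longleftrightarrow> err2 \<alpha> \<beta> \<sigma> d n \<le> \<epsilon>\<^sup>2 * T d"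
proof -
  have "\<epsilon> * err \<alpha> \<beta> \<sigma> d 0 = sqrt (\<epsilon>\<^sup>2 * T d)"
    unfolding err_def err2_0 using assms by (simp add: real_sqrt_mult)
  then show ?thesis unfolding err_def by simp
qed

lemma nnor_exists: assumes "d \<ge> 1" "\<epsilon> > 0" shows "\<exists>n. err2 \<alpha> \<beta> \<sigma> d n \<le> \<epsilon>\<^sup>2 * T d"
proof -
  have ep: "\<epsilon>\<^sup>2 * T d > 0" using T_pos[OF assms(1)] assms(2) by simp
  obtain F where F: "finite F" "dist (sum (e d) F) (T d) \<le> \<epsilon>\<^sup>2 * T d"
    using infsum_finite_approximation[OF summ[of d UNIV] ep] unfolding T_def by auto
  have "T d = infsum (e d) (F \<union> (UNIV - F))" unfolding T_def by simp
  also have "\<dots> = sum (e d) F + infsum (e d) (UNIV - F)"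
    using F by (subst infsum_Un_disjoint) (auto simp: summ)
  finally have "infsum (e d) (UNIV - F) \<le> \<epsilon>\<^sup>2 * T d" using F(2) by (simp add: dist_real_def)
  then show ?thesis using err2_le[OF F(1) order.refl, of d] by (meson order.trans)
qed

lemma nnor_spec: assumes "d \<ge> 1" "\<epsilon> > 0"
  shows "err2 \<alpha> \<beta> \<sigma> d (n_nor \<alpha> \<beta> \<sigma> d \<epsilon>) \<le> \<epsilon>\<^sup>2 * T d"
proof -
  obtain n where "err2 \<alpha> \<beta> \<sigma> d n \<le> \<epsilon>\<^sup>2 * T d" using nnor_exists[OF assms] by auto
  then have "err \<alpha> \<beta> \<sigma> d n \<le> \<epsilon> * err \<alpha> \<beta> \<sigma> d 0" using err_iff[OF assms(2)] by simp
  then have "err \<alpha> \<beta> \<sigma> d (n_nor \<alpha> \<beta> \<sigma> d \<epsilon>) \<le> \<epsilon> * err \<alpha> \<beta> \<sigma> d 0"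
    unfolding n_nor_def by (rule LeastI)
  then show ?thesis using err_iff[OF assms(2)] by simp
qed

lemma nnor_le: assumes "\<epsilon> > 0" "err2 \<alpha> \<beta> \<sigma> d n \<le> \<epsilon>\<^sup>2 * T d"
  shows "n_nor \<alpha> \<beta> \<sigma> d \<epsilon> \<le> n"
  unfolding n_nor_def by (rule Least_le) (use assms err_iff in auto)

lemma tail_ge: assumes "finite S" "finite G"
  shows "sum (e d) (G - S) \<le> infsum (e d) (UNIV - S)"
  by (rule finite_sum_le_infsum) (use assms in \<open>auto simp: summ eig_nn\<close>)

end

lemma eps_contra:
  fixes r B :: real
  assumes r: "r > 0" and H: "\<And>\<epsilon>. 0 < \<epsilon> \<Longrightarrow> \<epsilon> < 1 \<Longrightarrow> \<epsilon> powr (- r) \<le> B"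
  shows False
proof -
  define x where "x = 1 / (\<bar>B\<bar> + 2)"
  have x: "0 < x" "x < 1" unfolding x_def by auto
  define \<epsilon> where "\<epsilon> = x powr (1 / r)"
  have e0: "\<epsilon> > 0" unfolding \<epsilon>_def using x by simp
  have e1: "\<epsilon> < 1" unfolding \<epsilon>_def using x r powr_less_mono2[of "1/r" x 1] by simp
  have "\<epsilon> powr (- r) = x powr (-1)" unfolding \<epsilon>_def using r by (simp add: powr_powr)
  also have "\<dots> = \<bar>B\<bar> + 2" unfolding x_def by (simp add: powr_minus_divide)
  finally show False using H[OF e0 e1] by simp
qed


lemma aux1: "(\<beta>::real) > 0 \<Longrightarrow> (n::real) * m \<le> E * K \<Longrightarrow> n*m = \<beta> * 2 powr (- s) * n powr (-q) \<Longrightarrow> X \<le> n powr (-q) \<Longrightarrow>  \<beta> * 2 powr (- s) * X \<le> E * K"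
  by (smt (verit) mult_left_mono powr_ge_zero zero_le_mult_iff)

lemma aux2: fixes \<beta> C E F K s q :: real
  assumes "\<beta> > 0" "C \<ge> 1" "\<beta> * 2 powr (- s) * (C powr (- q) * E) \<le> F * K" shows "E \<le> F * K * 2 powr s * C powr q / \<beta>"
proof -
  have a: "2 powr (-s) = 1 / 2 powr s" "C powr (-q) = 1 / C powr q" using assms by (simp_all add: powr_minus_divide)
  have p: "2 powr s > 0" "C powr q > 0" using assms by auto
  from assms(3) have "\<beta> * E / (2 powr s * C powr q) \<le> F * K" unfolding a by simp
  then show ?thesis using p assms(1) by (simp add: field_simps)
qed

lemma aux3: assumes "(e::real) > 0" shows "e powr (- (2 - p * q)) = e powr (p * q) / e\<^sup>2"
proof -
  have "- (2 - p * q) = p * q - 2" by simp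
  then show ?thesis using assms by (simp add: powr_diff)
qed

lemma aux4: assumes "(e::real) > 0" "E \<le> e\<^sup>2 * R" shows "E / e\<^sup>2 \<le> R"
  using assms by (simp add: divide_le_eq mult.commute)


lemma tend_aux: "((\<lambda>d::nat. a - L / ln (real d)) \<longlongrightarrow> (a::real)) sequentially"
proof -
  have "filterlim (\<lambda>d::nat. ln (real d)) at_top sequentially"
    by (rule filterlim_compose[OF ln_at_top filterlim_real_sequentially])
  then have "((\<lambda>d::nat. L / ln (real d)) \<longlongrightarrow> 0) sequentially"
    by (intro tendsto_divide_0[OF tendsto_const] filterlim_at_top_imp_at_infinity)
  from tendsto_diff[OF tendsto_const this, of a] show ?thesis by simp
qed

context setting
begin

lemma count_tail:
  assumes S: "finite S" "card S \<le> n" and A: "finite A" "inj_on g A"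
    and m: "\<And>x. x \<in> A \<Longrightarrow> e d (g x) \<ge> m" "m \<ge> 0"
  shows "(real (card A) - real n) * m \<le> infsum (e d) (UNIV - S)"
proof -
  define G where "G = g ` A"
  have cG: "card G = card A" unfolding G_def using A by (simp add: card_image)
  have fG: "finite G" unfolding G_def using A by simp
  have "card G - card S \<le> card (G - S)" by (rule diff_card_le_card_Diff[OF S(1)])
  then have cc: "real (card A) - real n \<le> real (card (G - S))" using cG S(2) by linarith
  have "(real (card A) - real n) * m \<le> real (card (G - S)) * m"
    by (rule mult_right_mono[OF cc m(2)])
  also have "\<dots> = (\<Sum>i\<in>G - S. m)" by simp
  also have "\<dots> \<le> sum (e d) (G - S)"
    by (rule sum_mono) (use m(1) in \<open>auto simp: G_def\<close>)
  also have "\<dots> \<le> infsum (e d) (UNIV - S)" by (rule tail_ge[OF S(1) fG])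
  finally show ?thesis .
qed

lemma sub_tail:
  assumes S: "finite S" "card S \<le> n"
  shows "(\<Sum>j=1..d. \<beta> j) - real n \<le> infsum (e d) (UNIV - S)"
proof -
  define G where "G = (\<lambda>j. Some (j, 1::nat, True)) ` {1..d}"
  have fG: "finite G" unfolding G_def by simp
  have sG: "sum (e d) G = (\<Sum>j=1..d. \<beta> j)" unfolding G_def
    by (subst sum.reindex) (auto simp: inj_on_def eig_Some)
  have "sum (e d) (G \<inter> S) \<le> real (card (G \<inter> S)) * 1"
    by (rule sum_bounded_above) (auto simp: G_def eig_Some b_le1)
  also have "card (G \<inter> S) \<le> card S" by (rule card_mono[OF S(1)]) auto
  finally have "sum (e d) (G \<inter> S) \<le> real n" using S(2) by linarith
  moreover have "sum (e d) (G - S) = sum (e d) G - sum (e d) (G \<inter> S)"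
  proof -
    have "G - S = G - (G \<inter> S)" by auto
    then show ?thesis using fG by (simp add: sum_diff)
  qed
  ultimately have "(\<Sum>j=1..d. \<beta> j) - real n \<le> sum (e d) (G - S)" using sG by linarith
  also have "\<dots> \<le> infsum (e d) (UNIV - S)" by (rule tail_ge[OF S(1) fG])
  finally show ?thesis .
qed


lemma spt_D:
  assumes "spt_bound \<alpha> \<beta> \<sigma> p"
  obtains C where "C \<ge> 1" "\<And>d \<epsilon>. d \<ge> 1 \<Longrightarrow> 0 < \<epsilon> \<Longrightarrow> \<epsilon> < 1 \<Longrightarrow> real (n_nor \<alpha> \<beta> \<sigma> d \<epsilon>) \<le> C * \<epsilon> powr (- p)"
proof -
  from assms obtain C where C: "C \<ge> 0" "\<forall>d\<ge>1. \<forall>\<epsilon>. 0 < \<epsilon> \<and> \<epsilon> < 1 \<longrightarrow> real (n_nor \<alpha> \<beta> \<sigma> d \<epsilon>) \<le> C * \<epsilon> powr (- p)"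
    unfolding spt_bound_def by auto
  show ?thesis
  proof (rule that[of "max C 1"])
    fix d :: nat and \<epsilon> :: real assume h: "d \<ge> 1" "0 < \<epsilon>" "\<epsilon> < 1"
    have "real (n_nor \<alpha> \<beta> \<sigma> d \<epsilon>) \<le> C * \<epsilon> powr (- p)" using C h by auto
    also have "\<dots> \<le> max C 1 * \<epsilon> powr (- p)" by (intro mult_right_mono) auto
    finally show "real (n_nor \<alpha> \<beta> \<sigma> d \<epsilon>) \<le> max C 1 * \<epsilon> powr (- p)" .
  qed simp
qed

lemma nnor_pos: assumes "d \<ge> 1" "0 < \<epsilon>" "\<epsilon> < 1" shows "n_nor \<alpha> \<beta> \<sigma> d \<epsilon> \<ge> 1"
proof (rule ccontr)
  assume "\<not> ?thesis"
  then have "n_nor \<alpha> \<beta> \<sigma> d \<epsilon> = 0" by simp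
  then have "T d \<le> \<epsilon>\<^sup>2 * T d" using nnor_spec[OF assms(1,2)] err2_0 by simp
  moreover have "\<epsilon>\<^sup>2 < 1" using assms by (simp add: power_less_one_iff)
  ultimately show False using T_pos[OF assms(1)] by (simp add: mult_le_cancel_right1)
qed

lemma L1:
  assumes "spt_bound \<alpha> \<beta> \<sigma> p"
  shows "p \<ge> 2 / (\<sigma> 1 - 1)"
proof (rule ccontr)
  assume "\<not> ?thesis"
  define q where "q = \<sigma> 1 - 1"
  have q: "q > 0" unfolding q_def using s1 by simp
  have pq: "p * q < 2" using \<open>\<not> _\<close> q unfolding q_def[symmetric] by (simp add: field_simps)
  obtain C where C: "C \<ge> 1" "\<And>d \<epsilon>. d \<ge> 1 \<Longrightarrow> 0 < \<epsilon> \<Longrightarrow> \<epsilon> < 1 \<Longrightarrow> real (n_nor \<alpha> \<beta> \<sigma> d \<epsilon>) \<le> C * \<epsilon> powr (- p)"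
    using spt_D[OF assms] by blast
  have b1p: "\<beta> 1 > 0" using b_pos by simp
  show False
  proof (rule eps_contra[of "2 - p * q" "K0 * 2 powr \<sigma> 1 * C powr q / \<beta> 1"])
    show "2 - p * q > 0" using pq by simp
  next
    fix \<epsilon> :: real assume e: "0 < \<epsilon>" "\<epsilon> < 1"
    define n where "n = n_nor \<alpha> \<beta> \<sigma> 1 \<epsilon>"
    have n1: "n \<ge> 1" unfolding n_def using nnor_pos[OF _ e] by simp
    have nC: "real n \<le> C * \<epsilon> powr (- p)" unfolding n_def using C(2)[OF _ e] by simp
    have "err2 \<alpha> \<beta> \<sigma> 1 n \<le> \<epsilon>\<^sup>2 * T 1" unfolding n_def by (rule nnor_spec) (use e in auto)
    also have "\<dots> \<le> \<epsilon>\<^sup>2 * K0" using T_le[of 1] b1 K0_ge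
      by (intro mult_left_mono) (auto intro: order.trans mult_left_le)
    finally have up: "err2 \<alpha> \<beta> \<sigma> 1 n \<le> \<epsilon>\<^sup>2 * K0" .
    define m where "m = \<beta> 1 * real (2 * n) powr (- \<sigma> 1)"
    have m0: "m \<ge> 0" unfolding m_def using b1p by simp
    have "(real (card {1..2*n}) - real n) * m \<le> err2 \<alpha> \<beta> \<sigma> 1 n"
    proof (rule err2_ge)
      fix S :: "(nat \<times> nat \<times> bool) option set" assume S: "finite S" "card S \<le> n"
      show "(real (card {1..2*n}) - real n) * m \<le> infsum (e 1) (UNIV - S)"
      proof (rule count_tail[OF S, of "{1..2*n}" "\<lambda>k. Some (1, k, True)"])
        fix k assume k: "k \<in> {1..2*n}"
        have "real (2 * n) powr (- \<sigma> 1) \<le> real k powr (- \<sigma> 1)"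
          using k s1 by (intro powr_mono2') auto
        then show "m \<le> e 1 (Some (1, k, True))" unfolding m_def using k b1p
          by (simp add: eig_Some)
      qed (use m0 in \<open>auto simp: inj_on_def\<close>)
    qed
    then have low: "real n * m \<le> \<epsilon>\<^sup>2 * K0" using up by simp
    have "real n * m = \<beta> 1 * 2 powr (- \<sigma> 1) * real n powr (- q)"
    proof -
      have "real (2 * n) powr (- \<sigma> 1) = 2 powr (- \<sigma> 1) * real n powr (- \<sigma> 1)"
        by (simp add: powr_mult)
      moreover have "real n * real n powr (- \<sigma> 1) = real n powr (- q)"
        using n1 unfolding q_def by (simp add: powr_add[symmetric] powr_mult_base)
      ultimately show ?thesis unfolding m_def by (simp add: algebra_simps)
    qed
    moreover have "(C * \<epsilon> powr (- p)) powr (- q) \<le> real n powr (- q)"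
      using n1 q nC by (intro powr_mono2') auto
    moreover have "(C * \<epsilon> powr (- p)) powr (- q) = C powr (- q) * \<epsilon> powr (p * q)"
      using C(1) e by (simp add: powr_mult powr_powr)
    ultimately have "\<beta> 1 * 2 powr (- \<sigma> 1) * (C powr (- q) * \<epsilon> powr (p * q)) \<le> \<epsilon>\<^sup>2 * K0"
      using low b1p by (intro aux1[of "\<beta> 1" "real n" m]) auto
    then have "\<epsilon> powr (p * q) \<le> \<epsilon>\<^sup>2 * K0 * 2 powr \<sigma> 1 * C powr q / \<beta> 1"
      using b1p C(1) by (intro aux2) auto
    moreover have "\<epsilon> powr (- (2 - p * q)) = \<epsilon> powr (p * q) / \<epsilon>\<^sup>2"
      using e(1) by (rule aux3)
    ultimately show "\<epsilon> powr (- (2 - p * q)) \<le> K0 * 2 powr \<sigma> 1 * C powr q / \<beta> 1"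
      using e by (auto intro: aux4)
  qed
qed


lemma Bbound:
  assumes "spt_bound \<alpha> \<beta> \<sigma> p"
  obtains Bm where "\<And>d. (\<Sum>j=1..d. \<beta> j) \<le> Bm"
proof -
  obtain C where C: "C \<ge> 1" "\<And>d \<epsilon>. d \<ge> 1 \<Longrightarrow> 0 < \<epsilon> \<Longrightarrow> \<epsilon> < 1 \<Longrightarrow> real (n_nor \<alpha> \<beta> \<sigma> d \<epsilon>) \<le> C * \<epsilon> powr (- p)"
    using spt_D[OF assms] by blast
  define \<epsilon>0 where "\<epsilon>0 = sqrt (1 / (2 * K0))"
  have K: "K0 \<ge> 1" by (rule K0_ge)
  have e0: "\<epsilon>0 > 0" unfolding \<epsilon>0_def using K by simp
  have e0sq: "\<epsilon>0\<^sup>2 = 1 / (2 * K0)" unfolding \<epsilon>0_def using K by simp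
  have e1: "\<epsilon>0 < 1"
  proof -
    have "1 / (2 * K0) < 1" using K by simp
    then show ?thesis unfolding \<epsilon>0_def by simp
  qed
  show ?thesis
  proof (rule that[of "2 * (C * \<epsilon>0 powr (- p))"])
    fix d :: nat
    show "(\<Sum>j=1..d. \<beta> j) \<le> 2 * (C * \<epsilon>0 powr (- p))"
    proof (cases "d \<ge> 1")
      case False
      then have "d = 0" by simp
      then show ?thesis using C(1) by simp
    next
      case True
      define n where "n = n_nor \<alpha> \<beta> \<sigma> d \<epsilon>0"
      have "(\<Sum>j=1..d. \<beta> j) - real n \<le> err2 \<alpha> \<beta> \<sigma> d n"
        by (rule err2_ge, rule sub_tail)
      also have "\<dots> \<le> \<epsilon>0\<^sup>2 * T d" unfolding n_def by (rule nnor_spec[OF True e0])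
      also have "\<dots> \<le> \<epsilon>0\<^sup>2 * (K0 * (\<Sum>j=1..d. \<beta> j))" by (intro mult_left_mono T_le) auto
      also have "\<dots> = (\<Sum>j=1..d. \<beta> j) / 2" unfolding e0sq using K by simp
      finally have "(\<Sum>j=1..d. \<beta> j) \<le> 2 * real n" by simp
      also have "real n \<le> C * \<epsilon>0 powr (- p)" unfolding n_def by (rule C(2)[OF True e0 e1])
      finally show ?thesis by simp
    qed
  qed
qed

lemma L2:
  assumes sp: "spt_bound \<alpha> \<beta> \<sigma> p"
  shows "p > 0" "A_star \<beta> \<ge> ereal (1 + 2 / p)"
proof -
  have "2 / (\<sigma> 1 - 1) > 0" using s1 by simp
  then show p0: "p > 0" using L1[OF sp] by linarith
  obtain C where C: "C \<ge> 1" "\<And>d \<epsilon>. d \<ge> 1 \<Longrightarrow> 0 < \<epsilon> \<Longrightarrow> \<epsilon> < 1 \<Longrightarrow> real (n_nor \<alpha> \<beta> \<sigma> d \<epsilon>) \<le> C * \<epsilon> powr (- p)"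
    using spt_D[OF sp] by blast
  obtain Bm where Bm: "\<And>d. (\<Sum>j=1..d. \<beta> j) \<le> Bm" using Bbound[OF sp] by blast
  define Tb where "Tb = K0 * Bm"
  have Tb: "T d \<le> Tb" for d unfolding Tb_def
    using T_le[of d] Bm[of d] K0_ge by (meson order.trans mult_left_mono order_trans zero_le_one)
  have Tbp: "Tb > 0" using Tb[of 1] T_pos[of 1] by simp
  define a where "a = 1 + 2 / p"
  define D where "D = 2 * Tb * (2 * C) powr (2 / p)"
  have Dp: "D > 0" unfolding D_def using Tbp C(1) by simp
  have bnd: "\<beta> m \<le> D * real m powr (- a)" if m: "real m > 2 * C" for m :: nat
  proof -
    have m1: "m \<ge> 1" using m C(1) by (cases m) auto
    have mp: "real m > 0" using m1 by simp
    define \<epsilon> where "\<epsilon> = (2 * C / real m) powr (1 / p)"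
    have e0: "\<epsilon> > 0" unfolding \<epsilon>_def using C(1) mp by simp
    have e1: "\<epsilon> < 1" unfolding \<epsilon>_def using m C(1) p0 powr_less_mono2[of "1/p" "2 * C / real m" 1] by simp
    have Ce: "C * \<epsilon> powr (- p) = real m / 2"
    proof -
      have "\<epsilon> powr (- p) = (2 * C / real m) powr (-1)" unfolding \<epsilon>_def using p0 C(1) by (simp add: powr_powr)
      also have "\<dots> = real m / (2 * C)" using C(1) mp by (simp add: powr_minus_divide)
      finally show ?thesis using C(1) by simp
    qed
    have esq: "\<epsilon>\<^sup>2 = (2 * C) powr (2 / p) / real m powr (2 / p)"
    proof -
      have "\<epsilon>\<^sup>2 = \<epsilon> powr 2" using e0 by (simp add: powr_numeral)
      also have "\<dots> = (2 * C / real m) powr (2 / p)" unfolding \<epsilon>_def using C(1) by (simp add: powr_powr)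
      also have "\<dots> = (2 * C) powr (2 / p) / real m powr (2 / p)" using C(1) mp by (simp add: powr_divide)
      finally show ?thesis .
    qed
    define n where "n = n_nor \<alpha> \<beta> \<sigma> m \<epsilon>"
    have nle: "real n \<le> real m / 2" unfolding n_def using C(2)[OF m1 e0 e1] Ce by simp
    have "(real (card {1..m}) - real n) * \<beta> m \<le> err2 \<alpha> \<beta> \<sigma> m n"
    proof (rule err2_ge)
      fix S :: "(nat \<times> nat \<times> bool) option set" assume S: "finite S" "card S \<le> n"
      show "(real (card {1..m}) - real n) * \<beta> m \<le> infsum (e m) (UNIV - S)"
      proof (rule count_tail[OF S, of "{1..m}" "\<lambda>j. Some (j, 1, True)"])
        fix j assume j: "j \<in> {1..m}"
        then show "\<beta> m \<le> e m (Some (j, 1, True))" using b_mono[of j m] by (simp add: eig_Some)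
      qed (use b_pos[OF m1] in \<open>auto simp: inj_on_def\<close>)
    qed
    also have "\<dots> \<le> \<epsilon>\<^sup>2 * T m" unfolding n_def by (rule nnor_spec[OF m1 e0])
    also have "\<dots> \<le> \<epsilon>\<^sup>2 * Tb" by (intro mult_left_mono Tb) auto
    finally have "(real m - real n) * \<beta> m \<le> \<epsilon>\<^sup>2 * Tb" by simp
    moreover have "(real m / 2) * \<beta> m \<le> (real m - real n) * \<beta> m"
      using nle b_pos[OF m1] by (intro mult_right_mono) auto
    ultimately have "(real m / 2) * \<beta> m \<le> (2 * C) powr (2 / p) / real m powr (2 / p) * Tb"
      unfolding esq by linarith
    then have "\<beta> m \<le> 2 * Tb * (2 * C) powr (2 / p) / (real m * real m powr (2 / p))"
      using mp by (simp add: field_simps)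
    also have "real m * real m powr (2 / p) = real m powr a"
      unfolding a_def using mp by (simp add: powr_add)
    also have "2 * Tb * (2 * C) powr (2 / p) / real m powr a = D * real m powr (- a)"
      unfolding D_def by (simp add: powr_minus divide_inverse)
    finally show ?thesis .
  qed
  have ev: "eventually (\<lambda>m. ereal (a - ln D / ln (real m)) \<le> ereal (ln (1 / \<beta> m) / ln (real m))) sequentially"
  proof -
    obtain N :: nat where N: "real N > 2 * C + 2" using reals_Archimedean2 by blast
    show ?thesis
    proof (rule eventually_sequentiallyI[of N])
      fix m assume mN: "N \<le> m"
      have m: "real m > 2 * C" "real m > 2" using mN N C(1) by linarith+
      have m1: "m \<ge> 1" using m by simp
      have lnm: "ln (real m) > 0" using m by simp
      have bp: "\<beta> m > 0" using b_pos[OF m1] .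
      have "ln (\<beta> m) \<le> ln (D * real m powr (- a))" using bnd[OF m(1)] bp by simp
      also have "\<dots> = ln D - a * ln (real m)" using Dp m by (simp add: ln_mult ln_powr)
      finally have "a * ln (real m) - ln D \<le> ln (1 / \<beta> m)" using bp by (simp add: ln_div)
      then have "(a * ln (real m) - ln D) / ln (real m) \<le> ln (1 / \<beta> m) / ln (real m)"
        using lnm by (simp add: divide_right_mono)
      moreover have "(a * ln (real m) - ln D) / ln (real m) = a - ln D / ln (real m)"
        using lnm by (simp add: field_simps)
      ultimately show "ereal (a - ln D / ln (real m)) \<le> ereal (ln (1 / \<beta> m) / ln (real m))" by simp
    qed
  qed
  have "liminf (\<lambda>m. ereal (a - ln D / ln (real m))) = ereal a"
    by (rule lim_imp_Liminf) (simp_all add: tend_aux)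
  moreover have "liminf (\<lambda>m. ereal (a - ln D / ln (real m))) \<le> A_star \<beta>"
    unfolding A_star_def by (rule Liminf_mono[OF ev])
  ultimately show "A_star \<beta> \<ge> ereal (1 + 2 / p)" unfolding a_def by simp
qed

end

context setting
begin

lemma U:
  assumes p0: "p > 0" and ps: "p > 2 / (\<sigma> 1 - 1)" and pA: "A_star \<beta> > ereal (1 + 2 / p)"
  shows "spt_bound \<alpha> \<beta> \<sigma> p"
proof -
  define \<tau> where "\<tau> = p / (p + 2)"
  have t0: "0 < \<tau>" "\<tau> < 1" unfolding \<tau>_def using p0 by auto
  have inv: "1 / \<tau> = 1 + 2 / p" unfolding \<tau>_def using p0 by (simp add: field_simps)
  have st: "\<sigma> 1 * \<tau> > 1"
  proof -
    have "1 + 2 / p < \<sigma> 1" using ps s1 p0 by (simp add: field_simps)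
    then have "1 / \<tau> < \<sigma> 1" using inv by simp
    then show ?thesis using t0 by (simp add: field_simps)
  qed
  obtain b where b: "ereal (1 + 2 / p) < ereal b" "ereal b < A_star \<beta>" using ereal_dense2[OF pA] by blast
  have bt: "b * \<tau> > 1"
  proof -
    have "1 / \<tau> < b" using b(1) inv by simp
    then show ?thesis using t0 by (simp add: field_simps)
  qed
  have "eventually (\<lambda>d. ereal (ln (1 / \<beta> d) / ln (real d)) > ereal b) sequentially"
    using less_LiminfD[OF b(2)[unfolded A_star_def]] .
  then obtain N where N: "\<And>d. d \<ge> N \<Longrightarrow> ln (1 / \<beta> d) / ln (real d) > b"
    unfolding eventually_sequentially by auto
  define g where "g j = (if j \<ge> 1 then \<beta> j powr \<tau> else 0)" for j
  have gnn: "g j \<ge> 0" for j unfolding g_def by simp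
  have gb: "norm (g j) \<le> real j powr (- (b * \<tau>))" if j: "j \<ge> max N 2" for j
  proof -
    have j1: "j \<ge> 1" "real j > 1" using j by auto
    have lnj: "ln (real j) > 0" using j1 by simp
    have bp: "\<beta> j > 0" using b_pos j1 by simp
    have "b * ln (real j) < ln (1 / \<beta> j)" using N[of j] j lnj by (simp add: pos_less_divide_eq)
    then have "ln (\<beta> j) < ln (real j powr (- b))" using bp j1 by (simp add: ln_div ln_powr)
    then have "\<beta> j < real j powr (- b)" by (rule ln_less_cancel_iff[THEN iffD1, rotated 2]) (use bp j1 in auto)
    then have "\<beta> j powr \<tau> \<le> (real j powr (- b)) powr \<tau>" using bp t0 by (intro powr_mono2) auto
    then show ?thesis using j1 gnn[of j] by (simp add: g_def powr_powr)
  qed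
  have sg: "summable g"
    by (rule summable_comparison_test'[OF _ gb]) (use bt in \<open>simp add: summable_real_powr_iff\<close>)
  define B\<tau> where "B\<tau> = suminf g"
  have sumB: "(\<Sum>j=1..d. \<beta> j powr \<tau>) \<le> B\<tau>" for d
  proof -
    have "(\<Sum>j=1..d. \<beta> j powr \<tau>) = (\<Sum>j=1..d. g j)" by (intro sum.cong) (auto simp: g_def)
    also have "\<dots> \<le> B\<tau>" unfolding B\<tau>_def by (rule sum_le_suminf[OF sg]) (auto simp: gnn)
    finally show ?thesis .
  qed
  have Bpos: "B\<tau> > 0"
  proof -
    have "\<beta> 1 powr \<tau> > 0" using b_pos[of 1] by simp
    then show ?thesis using sumB[of 1] by (simp del: powr_gt_zero)
  qed
  have sumA: "(\<Sum>j=1..d. \<alpha> j) \<le> c * B\<tau>" for d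
  proof -
    have "(\<Sum>j=1..d. \<alpha> j) \<le> (\<Sum>j=1..d. c * \<beta> j powr \<tau>)"
    proof (rule sum_mono)
      fix j assume j: "j \<in> {1..d}"
      have "\<beta> j powr 1 \<le> \<beta> j powr \<tau>" using j t0 b_pos[of j] b_le1[of j] by (intro powr_mono') auto
      then have "\<beta> j \<le> \<beta> j powr \<tau>" using b_pos[of j] j by simp
      moreover have "\<alpha> j \<le> c * \<beta> j" using a_le[of j] j by simp
      ultimately show "\<alpha> j \<le> c * \<beta> j powr \<tau>" using c_pos by (meson less_imp_le mult_left_mono order_trans)
    qed
    also have "\<dots> \<le> c * B\<tau>" using sumB[of d] c_pos by (simp add: sum_distrib_left[symmetric])
    finally show ?thesis .
  qed
  define M where "M = (c * B\<tau>) powr \<tau> + 2 * Z (\<sigma> 1 * \<tau>) * B\<tau>"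
  have Mpos: "M > 0"
  proof -
    have "2 * Z (\<sigma> 1 * \<tau>) * B\<tau> > 0" using Bpos Z_ge1[OF st] by simp
    then show ?thesis unfolding M_def by (simp add: add_nonneg_pos)
  qed
  have FB: "(\<Sum>i\<in>F. e d i powr \<tau>) \<le> M" if F: "finite F" for d F
  proof -
    have "(\<Sum>i\<in>F. e d i powr \<tau>) \<le> (\<Sum>j=1..d. \<alpha> j) powr \<tau> + 2 * Z (\<sigma> 1 * \<tau>) * (\<Sum>j=1..d. \<beta> j powr \<tau>)"
      by (rule fin_bound[OF t0(1) _ st F]) (use t0 in simp)
    also have "(\<Sum>j=1..d. \<alpha> j) powr \<tau> \<le> (c * B\<tau>) powr \<tau>"
      using sumA[of d] t0 a_nn by (intro powr_mono2) (auto intro: sum_nonneg)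
    also have "2 * Z (\<sigma> 1 * \<tau>) * (\<Sum>j=1..d. \<beta> j powr \<tau>) \<le> 2 * Z (\<sigma> 1 * \<tau>) * B\<tau>"
      using sumB[of d] Z_ge1[OF st] by simp
    finally show ?thesis unfolding M_def by simp
  qed
  define C where "C = M / (\<beta> 1 / M) powr (p / 2)"
  show ?thesis unfolding spt_bound_def
  proof (intro conjI exI[of _ C] allI impI)
    show "p \<ge> 0" using p0 by simp
    show "C \<ge> 0" unfolding C_def using Mpos by simp
    fix d :: nat and \<epsilon> :: real assume d: "d \<ge> 1" and e: "0 < \<epsilon> \<and> \<epsilon> < 1"
    have b1p: "\<beta> 1 > 0" using b_pos by simp
    define y where "y = \<epsilon>\<^sup>2 * \<beta> 1 / M"
    have yp: "y > 0" unfolding y_def using e b1p Mpos by simp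
    define t where "t = y powr ((p + 2) / 2)"
    have tp: "t > 0" unfolding t_def using yp by simp
    have t1: "t powr (1 - \<tau>) = y"
    proof -
      have "(p + 2) / 2 * (1 - \<tau>) = 1" unfolding \<tau>_def using p0 by (simp add: field_simps)
      then show ?thesis unfolding t_def using yp by (simp add: powr_powr)
    qed
    have t2: "t powr \<tau> = y powr (p / 2)"
    proof -
      have "(p + 2) / 2 * \<tau> = p / 2" unfolding \<tau>_def using p0 by (simp add: field_simps)
      then show ?thesis unfolding t_def using yp by (simp add: powr_powr)
    qed
    have ttp: "t powr \<tau> > 0" using tp by simp
    define S where "S = {i. e d i > t}"
    have cardF: "real (card F) \<le> M / t powr \<tau>" if F: "finite F" "F \<subseteq> S" for F
    proof -
      have "real (card F) * t powr \<tau> = (\<Sum>i\<in>F. t powr \<tau>)" by simp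
      also have "\<dots> \<le> (\<Sum>i\<in>F. e d i powr \<tau>)"
        using F t0 tp by (intro sum_mono powr_mono2) (auto simp: S_def)
      also have "\<dots> \<le> M" by (rule FB[OF F(1)])
      finally show ?thesis using ttp by (simp add: pos_le_divide_eq)
    qed
    have fS: "finite S"
    proof (rule ccontr)
      assume "infinite S"
      then obtain F where F: "finite F" "card F = nat \<lceil>M / t powr \<tau>\<rceil> + 1" "F \<subseteq> S"
        using infinite_arbitrarily_large by blast
      have "real (card F) > M / t powr \<tau>" using F(2) by linarith
      then show False using cardF[OF F(1,3)] by simp
    qed
    have cS: "real (card S) \<le> M / t powr \<tau>" by (rule cardF[OF fS order.refl])
    have tail: "infsum (e d) (UNIV - S) \<le> y * M"
    proof (rule infsum_le_finite_sums[OF summ])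
      fix F assume F: "finite F" "F \<subseteq> UNIV - S"
      have "sum (e d) F \<le> (\<Sum>i\<in>F. y * e d i powr \<tau>)"
      proof (rule sum_mono)
        fix i assume i: "i \<in> F"
        have le: "e d i \<le> t" using i F by (auto simp: S_def)
        show "e d i \<le> y * e d i powr \<tau>"
        proof (cases "e d i = 0")
          case True then show ?thesis by simp
        next
          case False
          then have ep: "e d i > 0" using eig_nn[of d i] by simp
          have "e d i = e d i powr (1 - \<tau>) * e d i powr \<tau>" using ep by (simp add: powr_add[symmetric])
          also have "\<dots> \<le> t powr (1 - \<tau>) * e d i powr \<tau>"
            using le ep t0 by (intro mult_right_mono powr_mono2) auto
          finally show ?thesis using t1 by simp
        qed
      qed
      also have "\<dots> = y * (\<Sum>i\<in>F. e d i powr \<tau>)" by (simp add: sum_distrib_left)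
      also have "\<dots> \<le> y * M" using FB[OF F(1)] yp by simp
      finally show "sum (e d) F \<le> y * M" .
    qed
    have "y * M = \<epsilon>\<^sup>2 * \<beta> 1" unfolding y_def using Mpos by simp
    also have "\<dots> \<le> \<epsilon>\<^sup>2 * T d" using T_ge[OF d] by (simp add: mult_left_mono)
    finally have "err2 \<alpha> \<beta> \<sigma> d (card S) \<le> \<epsilon>\<^sup>2 * T d"
      using err2_le[OF fS order.refl, of d] tail by linarith
    then have "n_nor \<alpha> \<beta> \<sigma> d \<epsilon> \<le> card S" using e by (intro nnor_le) auto
    then have "real (n_nor \<alpha> \<beta> \<sigma> d \<epsilon>) \<le> M / t powr \<tau>" using cS by linarith
    also have "M / t powr \<tau> = C * \<epsilon> powr (- p)"
    proof -
      have "y powr (p / 2) = (\<epsilon>\<^sup>2) powr (p / 2) * (\<beta> 1 / M) powr (p / 2)"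
        unfolding y_def using e b1p Mpos by (simp add: powr_mult[symmetric])
      also have "(\<epsilon>\<^sup>2) powr (p / 2) = \<epsilon> powr p"
      proof -
        have "(\<epsilon>\<^sup>2) powr (p / 2) = (\<epsilon> powr 2) powr (p / 2)" using e by (simp add: powr_numeral)
        also have "\<dots> = \<epsilon> powr p" unfolding powr_powr by simp
        finally show ?thesis .
      qed
      finally have tt: "t powr \<tau> = \<epsilon> powr p * (\<beta> 1 / M) powr (p / 2)" using t2 by simp
      have "M / (\<epsilon> powr p * (\<beta> 1 / M) powr (p / 2)) = M / (\<beta> 1 / M) powr (p / 2) * \<epsilon> powr (- p)"
      proof -
        have "\<epsilon> powr (- p) = 1 / \<epsilon> powr p" by (simp add: powr_minus_divide)
        moreover have "\<epsilon> powr p > 0" "(\<beta> 1 / M) powr (p / 2) > 0" using e b1p Mpos by auto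
        ultimately show "M / (\<epsilon> powr p * (\<beta> 1 / M) powr (p / 2)) = M / (\<beta> 1 / M) powr (p / 2) * \<epsilon> powr (- p)"
          by simp
      qed
      then show ?thesis unfolding C_def tt .
    qed
    finally show "real (n_nor \<alpha> \<beta> \<sigma> d \<epsilon>) \<le> C * \<epsilon> powr (- p)" .
  qed
qed

end

theorem theorem2p2:
  fixes \<alpha> \<beta> \<sigma> :: "nat \<Rightarrow> real" and c :: real
  assumes "\<And>j. j \<ge> 1 \<Longrightarrow> \<alpha> j \<ge> 0"
    and "\<beta> 1 \<le> 1"
    and "\<And>j. j \<ge> 1 \<Longrightarrow> \<beta> (Suc j) \<le> \<beta> j"
    and "\<And>j. j \<ge> 1 \<Longrightarrow> \<beta> j > 0"
    and "\<sigma> 1 > 1"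
    and "\<And>j. j \<ge> 1 \<Longrightarrow> \<sigma> j \<le> \<sigma> (Suc j)"
    and "c > 0"
    and "\<And>j. j \<ge> 1 \<Longrightarrow> \<alpha> j \<le> c * \<beta> j"
  shows "(SPT_NOR \<alpha> \<beta> \<sigma> \<longleftrightarrow> A_star \<beta> > 1)
    \<and> (A_star \<beta> > 1 \<longrightarrow>
         p_str_avg \<alpha> \<beta> \<sigma> =
           max (if A_star \<beta> = \<infinity> then 0 else 2 / (real_of_ereal (A_star \<beta>) - 1))
               (2 / (\<sigma> 1 - 1)))"
proof -
  interpret setting \<alpha> \<beta> \<sigma> c using assms by unfold_locales
  define q where "q = max (if A_star \<beta> = \<infinity> then 0 else 2 / (real_of_ereal (A_star \<beta>) - 1)) (2 / (\<sigma> 1 - 1))"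
  have s0: "2 / (\<sigma> 1 - 1) > 0" using s1 by simp
  have i: "A_star \<beta> > 1" if sp: "SPT_NOR \<alpha> \<beta> \<sigma>"
  proof -
    obtain p where p: "spt_bound \<alpha> \<beta> \<sigma> p" using sp unfolding SPT_NOR_def by blast
    have "ereal 1 < ereal (1 + 2 / p)" using L2(1)[OF p] by simp
    also have "\<dots> \<le> A_star \<beta>" by (rule L2(2)[OF p])
    finally show ?thesis by (simp add: one_ereal_def)
  qed
  have ii: "spt_bound \<alpha> \<beta> \<sigma> p" if A: "A_star \<beta> > 1" and pq: "p > q" for p
  proof -
    have ps: "p > 2 / (\<sigma> 1 - 1)" using pq unfolding q_def by simp
    have p0: "p > 0" using ps s0 by linarith
    have "A_star \<beta> > ereal (1 + 2 / p)"
    proof (cases "A_star \<beta>")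
      case (real r)
      have r1: "r > 1" using A real by simp
      have "p > 2 / (r - 1)" using pq real unfolding q_def by simp
      then have "2 / p < r - 1" using p0 r1 by (simp add: field_simps)
      then show ?thesis using real by simp
    next
      case PInf then show ?thesis by simp
    next
      case MInf then show ?thesis using A by simp
    qed
    then show ?thesis by (rule U[OF p0 ps])
  qed
  have iii: "p \<ge> q" if p: "spt_bound \<alpha> \<beta> \<sigma> p" for p
  proof -
    have a: "p \<ge> 2 / (\<sigma> 1 - 1)" by (rule L1[OF p])
    have p0: "p > 0" by (rule L2(1)[OF p])
    have A: "A_star \<beta> \<ge> ereal (1 + 2 / p)" by (rule L2(2)[OF p])
    show ?thesis
    proof (cases "A_star \<beta>")
      case (real r)
      have "1 + 2 / p \<le> r" using A real by simp
      then have r1: "r > 1" "2 / p \<le> r - 1" using p0 by (smt (verit) divide_pos_pos)+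
      then have "2 / (r - 1) \<le> p" using p0 by (simp add: field_simps)
      then show ?thesis using a real unfolding q_def by simp
    next
      case PInf then show ?thesis using a p0 unfolding q_def by simp
    next
      case MInf then show ?thesis using A by simp
    qed
  qed
  have part1: "SPT_NOR \<alpha> \<beta> \<sigma> \<longleftrightarrow> A_star \<beta> > 1"
    using i ii[of "q + 1"] unfolding SPT_NOR_def by auto
  have part2: "p_str_avg \<alpha> \<beta> \<sigma> = q" if A: "A_star \<beta> > 1"
  proof -
    let ?X = "{p. spt_bound \<alpha> \<beta> \<sigma> p}"
    have ne: "?X \<noteq> {}" using ii[OF A, of "q + 1"] by auto
    have bb: "bdd_below ?X" using iii by (intro bdd_belowI) auto
    have "Inf ?X \<ge> q" using ne iii by (intro cInf_greatest) auto
    moreover have "Inf ?X \<le> q"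
    proof (rule field_le_epsilon)
      fix \<delta> :: real assume "\<delta> > 0"
      then have "q + \<delta> \<in> ?X" using ii[OF A, of "q + \<delta>"] by simp
      then show "Inf ?X \<le> q + \<delta>" using bb by (rule cInf_lower)
    qed
    ultimately show ?thesis unfolding p_str_avg_def by simp
  qed
  show ?thesis using part1 part2 unfolding q_def by simp
qed

end
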